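(* Consider the networked SIR epidemic-opinion model described in the context, under the standing assumption stated there, and let $(s_e,\mathbf 0,o_e)$ with $s_e\in[0,1]^n$ and $o_e=(\bar L+I_n)^{-1}(\mathbf 1_n-s_e)$ be an equilibrium. Then the opinions are in consensus, i.e. $[o_e]_i=[o_e]_j$ for all $i\ne j$, if and only if all communities have the same proportion of infections, i.e. $[s_e]_i=[s_e]_j$ for all $i\neq j$; in this case the equilibrium is $(s_e,\mathbf 0,\mathbf 1_n-s_e)$.
   Context: There are $n$ communities. For $t\ge0$ and $i\in[n]$, $s_i(t),x_i(t),o_i(t)\in[0,1]$ denote the susceptible proportion, infected proportion and opinion of community $i$. The disease transmission network is a directed graph $\mathcal G=(\mathcal V,\mathcal E)$ on $n$ nodes with edge weights $\beta_{ij}>0$ if $(v_j,v_i)\in\mathcal E$ (and $\beta_{ij}=0$ otherwise); $\mathcal N_i=\{v_j:(v_j,v_i)\in\mathcal E\}$. The opinion network is a directed graph $\bar{\mathcal G}$ on the same nodes with nonnegative weights $\bar a_{ij}$ and Laplacian $\bar L=\mathrm{diag}(k_1,\dots,k_n)-\bar A$, where $[\bar A]_{ij}=\bar a_{ij}$ and $k_i=\sum_j \bar a_{ij}$. Parameters: $\beta_{\min}>0$, $\gamma_{\min}>0$, recovery rates $\gamma_i$. The model is $\dot s_i=-s_i\sum_{j\in\mathcal N_i}\big(\beta_{ij}-(\beta_{ij}-\beta_{\min})o_i\big)x_j$, $\dot x_i=s_i\sum_{j\in\mathcal N_i}\big(\beta_{ij}-(\beta_{ij}-\beta_{\min})o_i\big)x_j-\big(\gamma_{\min}+(\gamma_i-\gamma_{\min})o_i\big)x_i$,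 $\dot o=(\mathbf 1_n-s)-(\bar L+I_n)o$. Standing assumption: $\gamma_i\ge\gamma_{\min}>0$, $\beta_{ij}\ge\beta_{\min}>0$ for all $j\in\mathcal N_i$, and both $\mathcal G$ and $\bar{\mathcal G}$ are strongly connected. *)

theory Defs
  imports "HOL-Analysis.Analysis"
begin

text \<open>Communities are indexed by a finite type 'n (so n = CARD('n)).
  A weighted digraph is given by weights w :: 'n => 'n => real, with an
  edge (v_j, v_i) iff w i j > 0.\<close>

definition edges_of :: "('n \<Rightarrow> 'n \<Rightarrow> real) \<Rightarrow> ('n \<times> 'n) set" where
  "edges_of w = {(j, i). w i j > 0}"

definition strongly_connected_w :: "('n \<Rightarrow> 'n \<Rightarrow> real) \<Rightarrow> bool" where
  "strongly_connected_w w \<longleftrightarrow> (\<forall>u v. (u, v) \<in> (edges_of w)\<^sup>*)"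

definition nbrs :: "('n \<Rightarrow> 'n \<Rightarrow> real) \<Rightarrow> 'n \<Rightarrow> 'n set" where
  "nbrs w i = {j. (j, i) \<in> edges_of w}"

definition laplacian :: "('n::finite \<Rightarrow> 'n \<Rightarrow> real) \<Rightarrow> real^'n^'n" where
  "laplacian a = (\<chi> i j. (if i = j then (\<Sum>k\<in>UNIV. a i k) else 0) - a i j)"

definition sir_rhs ::
  "('n::finite \<Rightarrow> 'n \<Rightarrow> real) \<Rightarrow> real \<Rightarrow> ('n \<Rightarrow> real) \<Rightarrow> real \<Rightarrow>
   ('n \<Rightarrow> 'n \<Rightarrow> real) \<Rightarrow> real^'n \<Rightarrow> real^'n \<Rightarrow> real^'n \<Rightarrow>
   (real^'n) \<times> (real^'n) \<times> (real^'n)" where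
  "sir_rhs beta beta_min gamma gamma_min abar s x op =
    (((\<chi> i. - s$i * (\<Sum>j\<in>nbrs beta i. (beta i j - (beta i j - beta_min) * op$i) * x$j))),
     ((\<chi> i. s$i * (\<Sum>j\<in>nbrs beta i. (beta i j - (beta i j - beta_min) * op$i) * x$j)
           - (gamma_min + (gamma i - gamma_min) * op$i) * x$i)),
     (vec 1 - s) - (laplacian abar + mat 1) *v op)"

definition is_equilibrium where
  "is_equilibrium beta beta_min gamma gamma_min abar s x op \<longleftrightarrow>
     sir_rhs beta beta_min gamma gamma_min abar s x op = (0, 0, 0)"

end

theory Submission
  imports Defs
begin

lemma lap_row:
  fixes a :: "'n::finite \<Rightarrow> 'n \<Rightarrow> real"
  shows "((laplacian a + mat 1) *v v)$i = v$i + (\<Sum>k\<in>UNIV. a i k * (v$i - v$k))"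
proof -
  have "((laplacian a + mat 1) *v v)$i = (\<Sum>j\<in>UNIV. ((if i = j then (\<Sum>k\<in>UNIV. a i k) else 0) - a i j + (if i = j then 1 else 0)) * v$j)"
    by (simp add: matrix_vector_mult_def laplacian_def mat_def)
  also have "\<dots> = (\<Sum>j\<in>UNIV. (if i = j then ((\<Sum>k\<in>UNIV. a i k) + 1) * v$j else 0) - a i j * v$j)"
    by (rule sum.cong) (auto simp: algebra_simps)
  also have "\<dots> = ((\<Sum>k\<in>UNIV. a i k) + 1) * v$i - (\<Sum>j\<in>UNIV. a i j * v$j)"
    by (simp add: sum_subtractf)
  also have "\<dots> = v$i + (\<Sum>k\<in>UNIV. a i k * (v$i - v$k))"
    by (simp add: algebra_simps sum_subtractf sum_distrib_left)
  finally show ?thesis .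
qed

lemma max_idx:
  fixes f :: "'n::finite \<Rightarrow> real"
  obtains i where "\<And>k. f k \<le> f i"
proof -
  have "Max (range f) \<in> range f" by (rule Max_in) auto
  then obtain i where "f i = Max (range f)" by (metis imageE)
  moreover have "\<And>k. f k \<le> Max (range f)" by (rule Max_ge) auto
  ultimately show ?thesis using that by metis
qed

lemma inj_M:
  fixes a :: "'n::finite \<Rightarrow> 'n \<Rightarrow> real"
  assumes nn: "\<And>i j. a i j \<ge> 0"
    and h: "\<And>i. w$i + (\<Sum>k\<in>UNIV. a i k * (w$i - w$k)) = 0"
  shows "w = 0"
proof -
  obtain i where i: "\<And>k. w$k \<le> w$i" using max_idx[of "\<lambda>k. w$k"] by blast
  have "(\<Sum>k\<in>UNIV. a i k * (w$i - w$k)) \<ge> 0"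
    by (rule sum_nonneg) (use nn i in \<open>auto intro: mult_nonneg_nonneg\<close>)
  hence up: "w$i \<le> 0" using h[of i] by linarith
  obtain j where j: "\<And>k. w$j \<le> w$k" using max_idx[of "\<lambda>k. - w$k"] by (metis neg_le_iff_le)
  have "(\<Sum>k\<in>UNIV. a j k * (w$j - w$k)) \<le> 0"
    by (rule sum_nonpos) (use nn j in \<open>auto intro: mult_nonneg_nonpos\<close>)
  hence lo: "w$j \<ge> 0" using h[of j] by linarith
  show ?thesis
  proof (rule iffD2[OF vec_eq_iff], rule allI)
    fix k show "w$k = 0$k" using i[of k] j[of k] up lo by simp
  qed
qed

theorem lemma4:
  fixes beta abar :: "'n::finite \<Rightarrow> 'n \<Rightarrow> real"
    and gamma :: "'n \<Rightarrow> real"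
    and beta_min gamma_min :: real
    and s_e o_e :: "real^'n"
  assumes beta_min_pos: "beta_min > 0"
    and gamma_min_pos: "gamma_min > 0"
    and gamma_ge: "\<And>i. gamma i \<ge> gamma_min"
    and beta_nonneg: "\<And>i j. beta i j \<ge> 0"
    and beta_ge: "\<And>i j. j \<in> nbrs beta i \<Longrightarrow> beta i j \<ge> beta_min"
    and abar_nonneg: "\<And>i j. abar i j \<ge> 0"
    and G_sc: "strongly_connected_w beta"
    and Gbar_sc: "strongly_connected_w abar"
    and s_range: "\<And>i. s_e$i \<in> {0..1}"
    and o_def: "o_e = matrix_inv (laplacian abar + mat 1) *v (vec 1 - s_e)"
    and equil: "is_equilibrium beta beta_min gamma gamma_min abar s_e 0 o_e"
  shows "((\<forall>i j. i \<noteq> j \<longrightarrow> o_e$i = o_e$j) \<longleftrightarrow> (\<forall>i j. i \<noteq> j \<longrightarrow> s_e$i = s_e$j))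
         \<and> ((\<forall>i j. i \<noteq> j \<longrightarrow> s_e$i = s_e$j) \<longrightarrow> o_e = vec 1 - s_e)"
proof -
  have "(vec 1 - s_e) - (laplacian abar + mat 1) *v o_e = 0"
    using equil unfolding is_equilibrium_def sir_rhs_def by simp
  hence "\<And>i. ((laplacian abar + mat 1) *v o_e)$i = 1 - s_e$i"
  proof -
    fix i
    assume eq: "(vec 1 - s_e) - (laplacian abar + mat 1) *v o_e = 0"
    have "((vec 1 - s_e) - (laplacian abar + mat 1) *v o_e)$i = 0" using eq by simp
    thus "((laplacian abar + mat 1) *v o_e)$i = 1 - s_e$i" by simp
  qed
  hence E: "\<And>i. o_e$i + (\<Sum>k\<in>UNIV. abar i k * (o_e$i - o_e$k)) = 1 - s_e$i"
    by (simp add: lap_row)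
  have A: "o_e = vec 1 - s_e" if oc: "\<forall>i j. i \<noteq> j \<longrightarrow> o_e$i = o_e$j"
  proof (rule iffD2[OF vec_eq_iff], rule allI)
    fix i
    have z: "\<And>k. abar i k * (o_e$i - o_e$k) = 0"
    proof -
      fix k show "abar i k * (o_e$i - o_e$k) = 0"
      proof (cases "i = k")
        case True thus ?thesis by simp
      next
        case False thus ?thesis using oc by (metis diff_self mult_zero_right)
      qed
    qed
    have "(\<Sum>k\<in>UNIV. abar i k * (o_e$i - o_e$k)) = 0" unfolding z by simp
    then show "o_e$i = (vec 1 - s_e)$i" using E[of i] by simp
  qed
  have B: "\<forall>i j. i \<noteq> j \<longrightarrow> o_e$i = o_e$j" if sc: "\<forall>i j. i \<noteq> j \<longrightarrow> s_e$i = s_e$j"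
  proof -
    obtain i0 :: 'n where True by simp
    define d where "d = 1 - s_e$i0"
    have sd: "\<And>i. 1 - s_e$i = d" unfolding d_def using sc by metis
    define w where "w = o_e - vec d"
    have "\<And>i. w$i + (\<Sum>k\<in>UNIV. abar i k * (w$i - w$k)) = 0"
      using E sd unfolding w_def by (simp add: algebra_simps)
    hence "w = 0" by (rule inj_M[OF abar_nonneg])
    hence "o_e = vec d" unfolding w_def by simp
    thus ?thesis by simp
  qed
  have C: "\<forall>i j. i \<noteq> j \<longrightarrow> s_e$i = s_e$j" if oc: "\<forall>i j. i \<noteq> j \<longrightarrow> o_e$i = o_e$j"
  proof (intro allI impI)
    fix i j :: 'n assume ij: "i \<noteq> j"
    have e: "o_e = vec 1 - s_e" by (rule A[OF oc])
    have "o_e$i = 1 - s_e$i" "o_e$j = 1 - s_e$j" by (subst e, simp)+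
    moreover have "o_e$i = o_e$j" using oc ij by blast
    ultimately show "s_e$i = s_e$j" by linarith
  qed
  show ?thesis
  proof (intro conjI impI iffI)
    assume "\<forall>i j. i \<noteq> j \<longrightarrow> o_e$i = o_e$j"
    thus "\<forall>i j. i \<noteq> j \<longrightarrow> s_e$i = s_e$j" by (rule C)
  next
    assume "\<forall>i j. i \<noteq> j \<longrightarrow> s_e$i = s_e$j"
    thus "\<forall>i j. i \<noteq> j \<longrightarrow> o_e$i = o_e$j" by (rule B)
  next
    assume "\<forall>i j. i \<noteq> j \<longrightarrow> s_e$i = s_e$j"
    thus "o_e = vec 1 - s_e" by (intro A B)
  qed
qed

end
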